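(* Let $(\varepsilon^-_n)$, $(\varepsilon^+_n)$ be sequences with $\varepsilon^-_n\le\varepsilon^+_n$, $n^{1/3}\varepsilon^-_n\to\infty$ and $\varepsilon^+_n\to0$; let $\varepsilon_n\in[\varepsilon^-_n,\varepsilon^+_n]$, $\gamma\in[-1,1]$ and $p_n=\frac1n(1+\gamma\varepsilon_n)$. Define the process $(S_k)_{k\ge0}$ by $S_0=0$ and $S_k=S_{k-1}+X_k-1$ for $k\ge1$, where conditionally on $X_1,\dots,X_{k-1}$, $X_k$ has the Binomial$(n-k-S_{k-1},p_n)$ distribution. Then for every $\eta>0$ there is $\kappa>0$, depending only on $\eta$ and $(\varepsilon^\pm_n)$, such that \[ \mathbb{P}\left(\sup_{0\le k\le 3n\varepsilon_n}\frac{1}{n\varepsilon_n^2}\left|S_k-k\left(\gamma\varepsilon_n-\frac{k}{2n}\right)\right|>\eta\right)\le\exp(-\kappa n\varepsilon_n^3), \] the supremum being over integers $k$. *)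

theory Defs
  imports "HOL-Probability.Probability"
begin

text \<open>Law of the path (S_0, ..., S_m) as a list of length m+1 (entry k is S_k).  If n - k - S_(k-1) were negative, the
  number of trials is truncated to 0 (this never occurs for the times
  relevant to the statement once n is large).\<close>
fun expl_path :: "nat \<Rightarrow> real \<Rightarrow> nat \<Rightarrow> int list pmf" where
  "expl_path n p 0 = return_pmf [0]"
| "expl_path n p (Suc k) =
     bind_pmf (expl_path n p k)
       (\<lambda>xs. map_pmf (\<lambda>x. xs @ [last xs + int x - 1])
               (binomial_pmf (nat (int n - int (Suc k) - last xs)) p))"

end

theory Submission
  imports Defs
begin

lemma binom_mgf:
  assumes "0 \<le> p" "p \<le> 1"
  shows "(\<integral>\<^sup>+x. ennreal (exp (l * real x)) \<partial>binomial_pmf N p) = ennreal ((1 - p + p * exp l) ^ N)"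
proof -
  have "(\<integral>\<^sup>+x. ennreal (exp (l * real x)) \<partial>binomial_pmf N p)
      = (\<Sum>x\<in>{..N}. ennreal (exp (l * real x)) * pmf (binomial_pmf N p) x)"
    by (rule nn_integral_measure_pmf_support) (use assms in \<open>auto simp: set_pmf_binomial_eq split: if_splits\<close>)
  also have "\<dots> = ennreal (\<Sum>x\<in>{..N}. exp (l * real x) * pmf (binomial_pmf N p) x)"
    by (subst sum_ennreal[symmetric]) (auto simp: ennreal_mult)
  also have "(\<Sum>x\<in>{..N}. exp (l * real x) * pmf (binomial_pmf N p) x)
      = (\<Sum>x\<le>N. of_nat (N choose x) * (p * exp l) ^ x * (1 - p) ^ (N - x))"
    using assms by (intro sum.cong) (auto simp: exp_of_nat_mult[symmetric] power_mult_distrib mult.commute mult.left_commute)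
  also have "\<dots> = (p * exp l + (1 - p)) ^ N"
    by (subst binomial_ring) simp
  finally show ?thesis by (simp add: algebra_simps)
qed

lemma binom_mgf_le:
  assumes "0 \<le> p" "p \<le> 1"
  shows "(1 - p + p * exp l) ^ N \<le> exp (real N * p * (exp l - 1))"
proof -
  have "(1 - p + p * exp l) ^ N = (1 + p * (exp l - 1)) ^ N" by (simp add: algebra_simps)
  also have "\<dots> \<le> exp (p * (exp l - 1)) ^ N"
  proof (rule power_mono)
    show "1 + p * (exp l - 1) \<le> exp (p * (exp l - 1))" by (rule exp_ge_add_one_self)
    have "0 \<le> 1 - p + p * exp l" using assms by (simp add: add_nonneg_nonneg)
    then show "0 \<le> 1 + p * (exp l - 1)" by (simp add: algebra_simps)
  qed
  also have "\<dots> = exp (real N * p * (exp l - 1))"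
    by (simp add: exp_of_nat_mult[symmetric] mult.assoc)
  finally show ?thesis .
qed

lemma term_step:
  fixes s g a l c :: real
  assumes "0 \<le> p" "p \<le> 1" "real N * p * (exp l - 1) \<le> c"
  shows "(\<integral>\<^sup>+x. ennreal (exp (l * (s + real x - 1 - g) - a)) \<partial>binomial_pmf N p)
         \<le> ennreal (exp (l * (s - 1 - g) - a + c))"
proof -
  have eq: "\<And>x. ennreal (exp (l * (s + real x - 1 - g) - a))
     = ennreal (exp (l * (s - 1 - g) - a)) * ennreal (exp (l * real x))"
    by (simp add: ennreal_mult[symmetric] exp_add[symmetric] algebra_simps)
  have "(\<integral>\<^sup>+x. ennreal (exp (l * (s + real x - 1 - g) - a)) \<partial>binomial_pmf N p)
      = ennreal (exp (l * (s - 1 - g) - a)) * (\<integral>\<^sup>+x. ennreal (exp (l * real x)) \<partial>binomial_pmf N p)"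
    unfolding eq by (rule nn_integral_cmult) simp
  also have "\<dots> = ennreal (exp (l * (s - 1 - g) - a) * (1 - p + p * exp l) ^ N)"
    using assms by (simp add: binom_mgf ennreal_mult)
  also have "\<dots> \<le> ennreal (exp (l * (s - 1 - g) - a) * exp c)"
  proof (rule ennreal_leI, rule mult_left_mono)
    have "(1 - p + p * exp l) ^ N \<le> exp (real N * p * (exp l - 1))" by (rule binom_mgf_le) (use assms in auto)
    also have "\<dots> \<le> exp c" using assms by simp
    finally show "(1 - p + p * exp l) ^ N \<le> exp c" .
  qed simp
  also have "\<dots> = ennreal (exp (l * (s - 1 - g) - a + c))" by (simp add: exp_add)
  finally show ?thesis .
qed


fun Gs :: "(nat \<Rightarrow> int \<Rightarrow> bool) \<Rightarrow> (nat \<Rightarrow> int \<Rightarrow> real) \<Rightarrow> nat \<Rightarrow> int list \<Rightarrow> real" where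
  "Gs B H 0 xs = H 0 (xs ! 0)"
| "Gs B H (Suc k) xs = (if \<exists>j\<le>k. B j (xs ! j) then Gs B H k xs else H (Suc k) (xs ! Suc k))"

lemma Gs_append: "k < length xs \<Longrightarrow> Gs B H k (xs @ ys) = Gs B H k xs"
proof (induction k)
  case (Suc k)
  have "(\<exists>j\<le>k. B j ((xs @ ys) ! j)) = (\<exists>j\<le>k. B j (xs ! j))"
    using Suc.prems by (metis Suc_lessD le_imp_less_Suc less_trans_Suc nth_append_left)
  then show ?case unfolding Gs.simps using Suc by (fastforce simp: nth_append)
qed (simp add: nth_append)

lemma Gs_stop: "\<exists>j\<le>k. B j (xs!j) \<Longrightarrow> \<exists>j\<le>k. B j (xs!j) \<and> Gs B H k xs = H j (xs!j)"
proof (induction k)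
  case (Suc k)
  show ?case
  proof (cases "\<exists>j\<le>k. B j (xs!j)")
    case True
    then show ?thesis using Suc.IH by (auto intro: le_SucI)
  next
    case False
    then have "B (Suc k) (xs ! Suc k)" using Suc.prems le_Suc_eq by blast
    then show ?thesis using False by auto
  qed
qed simp

lemma Gs_nostop: "\<not>(\<exists>j\<le>k. B j (xs!j)) \<Longrightarrow> Gs B H k xs = H k (xs!k)"
  by (cases k) auto

lemma Gs_nonneg: "(\<And>j s. 0 \<le> H j s) \<Longrightarrow> 0 \<le> Gs B H k xs"
  by (induction k) auto

lemma length_expl: "xs \<in> set_pmf (expl_path n p k) \<Longrightarrow> length xs = Suc k"
  by (induction k arbitrary: xs) auto

lemma maxineq:
  assumes Hnn: "\<And>j s. 0 \<le> H j s"
    and step: "\<And>j s. j < K \<Longrightarrow> \<not> B j s \<Longrightarrow>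
      (\<integral>\<^sup>+x. ennreal (H (Suc j) (s + int x - 1)) \<partial>binomial_pmf (nat (int n - int (Suc j) - s)) p) \<le> ennreal (H j s)"
  shows "k \<le> K \<Longrightarrow> (\<integral>\<^sup>+xs. ennreal (Gs B H k xs) \<partial>expl_path n p k) \<le> ennreal (H 0 0)"
proof (induction k)
  case 0
  then show ?case by simp
next
  case (Suc k)
  have "(\<integral>\<^sup>+xs. ennreal (Gs B H (Suc k) xs) \<partial>expl_path n p (Suc k))
     = (\<integral>\<^sup>+xs. \<integral>\<^sup>+x. ennreal (Gs B H (Suc k) (xs @ [last xs + int x - 1]))
          \<partial>binomial_pmf (nat (int n - int (Suc k) - last xs)) p \<partial>expl_path n p k)"
    by simp
  also have "\<dots> \<le> (\<integral>\<^sup>+xs. ennreal (Gs B H k xs) \<partial>expl_path n p k)"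
  proof (rule nn_integral_mono_AE, rule AE_pmfI)
    fix xs assume xs: "xs \<in> set_pmf (expl_path n p k)"
    hence len: "length xs = Suc k" by (rule length_expl)
    show "(\<integral>\<^sup>+x. ennreal (Gs B H (Suc k) (xs @ [last xs + int x - 1]))
          \<partial>binomial_pmf (nat (int n - int (Suc k) - last xs)) p) \<le> ennreal (Gs B H k xs)"
    proof (cases "\<exists>j\<le>k. B j (xs!j)")
      case True
      have "\<And>y. (\<exists>j\<le>k. B j ((xs @ [y]) ! j)) = (\<exists>j\<le>k. B j (xs ! j))"
        using len by (metis le_imp_less_Suc nth_append_left)
      then have "\<And>y. Gs B H (Suc k) (xs @ [y]) = Gs B H k xs"
        using True len by (simp add: Gs_append)
      then show ?thesis by simp
    next
      case False
      have ex: "\<And>y. (\<exists>j\<le>k. B j ((xs @ [y]) ! j)) = (\<exists>j\<le>k. B j (xs ! j))"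
        using len by (metis le_imp_less_Suc nth_append_left)
      have "\<And>y. Gs B H (Suc k) (xs @ [y]) = H (Suc k) y"
        unfolding Gs.simps ex using False len by (fastforce simp: nth_append)
      moreover have lx: "last xs = xs ! k" using len by (cases xs rule: rev_cases) auto
      moreover have "Gs B H k xs = H k (xs ! k)" using False by (rule Gs_nostop)
      moreover have "\<not> B k (last xs)" using False lx by auto
      ultimately show ?thesis using step[of k "last xs"] Suc.prems by simp
    qed
  qed
  also have "\<dots> \<le> ennreal (H 0 0)" using Suc by simp
  finally show ?case .
qed

lemma maxprob:
  assumes Hnn: "\<And>j s. 0 \<le> H j s"
    and step: "\<And>j s. j < K \<Longrightarrow> \<not> B j s \<Longrightarrow>
      (\<integral>\<^sup>+x. ennreal (H (Suc j) (s + int x - 1)) \<partial>binomial_pmf (nat (int n - int (Suc j) - s)) p) \<le> ennreal (H j s)"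
    and thr: "\<And>j s. j \<le> K \<Longrightarrow> B j s \<Longrightarrow> A \<le> H j s" and A: "A > 0"
  shows "measure_pmf.prob (expl_path n p K) {xs. \<exists>j\<le>K. B j (xs!j)} \<le> H 0 0 / A"
proof -
  let ?E = "{xs. \<exists>j\<le>K. B j (xs!j)}"
  let ?M = "expl_path n p K"
  have "ennreal A * emeasure ?M ?E = (\<integral>\<^sup>+xs. ennreal A * indicator ?E xs \<partial>?M)"
    by (simp add: nn_integral_cmult_indicator)
  also have "\<dots> \<le> (\<integral>\<^sup>+xs. ennreal (Gs B H K xs) \<partial>?M)"
  proof (rule nn_integral_mono)
    fix xs
    show "ennreal A * indicator ?E xs \<le> ennreal (Gs B H K xs)"
    proof (cases "xs \<in> ?E")
      case True
      then obtain j where "j \<le> K" "B j (xs!j)" "Gs B H K xs = H j (xs!j)"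
        using Gs_stop[of K B xs H] by auto
      then show ?thesis using thr True by (auto intro: ennreal_leI)
    qed simp
  qed
  also have "\<dots> \<le> ennreal (H 0 0)" by (rule maxineq[OF Hnn step]) auto
  finally have "ennreal (A * measure_pmf.prob ?M ?E) \<le> ennreal (H 0 0)"
    by (simp add: measure_pmf.emeasure_eq_measure ennreal_mult A less_imp_le)
  then have "A * measure_pmf.prob ?M ?E \<le> H 0 0" using Hnn by (simp add: ennreal_le_iff)
  then show ?thesis using A by (simp add: field_simps)
qed


lemma exp_neg_le: "0 \<le> (l::real) \<Longrightarrow> exp (-l) \<le> 1 - l + l^2"
proof -
  assume l: "0 \<le> l"
  have "1 + l \<le> exp l" by (rule exp_ge_add_one_self)
  hence "exp (-l) \<le> 1 / (1 + l)" using l by (simp add: exp_minus field_simps)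
  also have "\<dots> \<le> 1 - l + l^2"
  proof -
    have "1 \<le> (1 + l) * (1 - l + l^2)" using l by (simp add: algebra_simps power2_eq_square)
    then show ?thesis using l by (simp add: field_simps)
  qed
  finally show ?thesis .
qed

lemma arith_core:
  fixes \<epsilon> \<gamma> u v w l :: real
  assumes e: "0 < \<epsilon>" "\<epsilon> \<le> 1/168" and g: "\<bar>\<gamma>\<bar> \<le> 1" and u: "\<bar>u\<bar> \<le> 9*\<epsilon>^2"
    and v: "0 \<le> v" "v \<le> 3*\<epsilon>" and w: "0 \<le> w" "w \<le> \<epsilon>^3" and l: "0 \<le> l" "l \<le> 1"
  shows "0 < 1 - v - u"
    and "((1+\<gamma>*\<epsilon>)*(1 - v - u))*(exp l - 1) \<le> l*(1 + \<gamma>*\<epsilon> - v + w/2) + (14*l*\<epsilon>^2 + 2*l^2)"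
    and "((1+\<gamma>*\<epsilon>)*(1 - v - u))*(exp (-l) - 1) \<le> -l*(1 + \<gamma>*\<epsilon> - v + w/2) + (14*l*\<epsilon>^2 + 2*l^2)"
proof -
  define Q where "Q = (1+\<gamma>*\<epsilon>)*(1 - v - u)"
  define R where "R = 1 + \<gamma>*\<epsilon> - v + w/2"
  have e2: "\<epsilon>^2 \<le> \<epsilon>/168" using e by (simp add: power2_eq_square mult_left_mono)
  have e3: "\<epsilon>^3 \<le> \<epsilon>^2" using e by (simp add: power2_eq_square power3_eq_cube)
  have ge: "\<bar>\<gamma>*\<epsilon>\<bar> \<le> \<epsilon>" using g e by (simp add: abs_mult mult_left_le_one_le)
  show pos: "0 < 1 - v - u" using u v e e2 by linarith
  have "Q - R = -u - (\<gamma>*\<epsilon>)*(v+u) - w/2" unfolding Q_def R_def by (simp add: algebra_simps)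
  moreover have "\<bar>(\<gamma>*\<epsilon>)*(v+u)\<bar> \<le> \<epsilon> * (4*\<epsilon>)"
  proof -
    have "\<bar>v+u\<bar> \<le> 4*\<epsilon>" using u v e2 by linarith
    then show ?thesis unfolding abs_mult[of "\<gamma>*\<epsilon>"] using ge by (intro mult_mono) auto
  qed
  ultimately have qr: "\<bar>Q - R\<bar> \<le> 14*\<epsilon>^2" using u w e3 by (simp add: power2_eq_square)
  have Q0: "0 \<le> Q" unfolding Q_def using pos ge e by (intro mult_nonneg_nonneg) auto
  have Q2: "Q \<le> 2"
  proof -
    have "Q \<le> (1+\<epsilon>)*(1+\<epsilon>)" unfolding Q_def using ge g u v e e2 by (intro mult_mono) auto
    also have "\<dots> \<le> (1+1/168)*(1+1/168)" using e by (intro mult_mono) auto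
    finally show ?thesis by simp
  qed
  have "Q*(exp l - 1) \<le> Q*(l + l^2)" using exp_bound[OF l] Q0 by (intro mult_left_mono) auto
  also have "\<dots> = l*Q + l^2*Q" by (simp add: algebra_simps)
  also have "\<dots> \<le> l*(R + 14*\<epsilon>^2) + l^2*2"
    using qr Q2 l by (intro add_mono mult_left_mono) auto
  finally show "((1+\<gamma>*\<epsilon>)*(1 - v - u))*(exp l - 1) \<le> l*(1 + \<gamma>*\<epsilon> - v + w/2) + (14*l*\<epsilon>^2 + 2*l^2)"
    unfolding Q_def[symmetric] R_def[symmetric] by (simp add: algebra_simps)
  have "Q*(exp (-l) - 1) \<le> Q*(-l + l^2)" using exp_neg_le[OF l(1)] Q0 by (intro mult_left_mono) auto
  also have "\<dots> = -(l*Q) + l^2*Q" by (simp add: algebra_simps)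
  also have "\<dots> \<le> -(l*(R - 14*\<epsilon>^2)) + l^2*2"
    using qr Q2 l by (intro add_mono mult_left_mono le_imp_neg_le) auto
  finally show "((1+\<gamma>*\<epsilon>)*(1 - v - u))*(exp (-l) - 1) \<le> -l*(1 + \<gamma>*\<epsilon> - v + w/2) + (14*l*\<epsilon>^2 + 2*l^2)"
    unfolding Q_def[symmetric] R_def[symmetric] by (simp add: algebra_simps)
qed


lemma main_bound:
  fixes n :: nat and \<epsilon> \<gamma> \<eta> :: real
  assumes \<eta>: "0 < \<eta>" "\<eta> \<le> 1" and e: "0 < \<epsilon>" "\<epsilon> \<le> \<eta>/168" and g: "-1 \<le> \<gamma>" "\<gamma> \<le> 1"
    and n2: "2 \<le> n" and ne1: "1 \<le> real n * \<epsilon>^3" and ne2: "96/\<eta>^2 \<le> real n * \<epsilon>^3"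
  shows "measure_pmf.prob (expl_path n ((1+\<gamma>*\<epsilon>)/real n) (nat \<lfloor>3*real n*\<epsilon>\<rfloor>))
     {xs. \<exists>k\<le>nat \<lfloor>3*real n*\<epsilon>\<rfloor>. \<eta>*(real n*\<epsilon>^2) < \<bar>real_of_int (xs!k) - real k*(\<gamma>*\<epsilon> - real k/(2*real n))\<bar>}
     \<le> exp (-(\<eta>^2/96) * real n * \<epsilon>^3)"
proof -
  define p where "p = (1+\<gamma>*\<epsilon>)/real n"
  define K where "K = nat \<lfloor>3*real n*\<epsilon>\<rfloor>"
  define l where "l = \<eta>/12*\<epsilon>"
  define \<alpha> where "\<alpha> = 14*l*\<epsilon>^2 + 2*l^2"
  define f where "f = (\<lambda>j::nat. real j*(\<gamma>*\<epsilon> - real j/(2*real n)))"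
  define t where "t = \<eta>*(real n*\<epsilon>^2)"
  define B where "B = (\<lambda>j (s::int). t < \<bar>real_of_int s - f j\<bar>)"
  define H where "H = (\<lambda>j (s::int). exp (l*(real_of_int s - f j) - \<alpha>*real j) + exp (-l*(real_of_int s - f j) - \<alpha>*real j))"
  define A where "A = exp (l*t - \<alpha>*real K)"
  have nR: "2 \<le> real n" using n2 by simp
  have e1: "\<epsilon> \<le> 1/168" using e \<eta> by simp
  have KR: "real K \<le> 3*real n*\<epsilon>"
  proof -
    have "0 \<le> \<lfloor>3*real n*\<epsilon>\<rfloor>" using e by simp
    then have "real K = real_of_int \<lfloor>3*real n*\<epsilon>\<rfloor>" unfolding K_def by simp
    also have "\<dots> \<le> 3*real n*\<epsilon>" by simp
    finally show ?thesis .
  qed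
  have ge: "\<bar>\<gamma>*\<epsilon>\<bar> \<le> \<epsilon>" using g e by (simp add: abs_mult mult_left_le_one_le)
  have p01: "0 \<le> p" "p \<le> 1"
  proof -
    have "0 \<le> 1 + \<gamma>*\<epsilon>" "1 + \<gamma>*\<epsilon> \<le> real n" using ge e1 nR by linarith+
    then show "0 \<le> p" "p \<le> 1" unfolding p_def using nR by (auto simp: field_simps)
  qed
  have l0: "0 \<le> l" unfolding l_def using \<eta> e by simp
  have "\<eta>*\<epsilon> \<le> 1*1" using \<eta> e e1 by (intro mult_mono) auto
  then have l1: "l \<le> 1" unfolding l_def by simp
  have \<alpha>0: "0 \<le> \<alpha>" unfolding \<alpha>_def using l0 by simp
  have winv: "1/real n \<le> \<epsilon>^3" using ne1 nR by (simp add: field_simps)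
  have Hnn: "\<And>j s. 0 \<le> H j s" by (simp add: H_def add_nonneg_nonneg)
  have thr: "A \<le> H j s" if "j \<le> K" "B j s" for j s
  proof -
    have aj: "\<alpha>*real j \<le> \<alpha>*real K" using that \<alpha>0 by (simp add: mult_left_mono)
    show ?thesis
    proof (cases "t < real_of_int s - f j")
      case True
      have "l*t \<le> l*(real_of_int s - f j)" using True l0 by (simp add: mult_left_mono)
      then have "A \<le> exp (l*(real_of_int s - f j) - \<alpha>*real j)" unfolding A_def using aj by simp
      then show ?thesis unfolding H_def by (smt (verit) exp_gt_zero)
    next
      case False
      then have "t < -(real_of_int s - f j)" using that unfolding B_def by linarith
      then have "l*t \<le> l*(-(real_of_int s - f j))" using l0 by (intro mult_left_mono) auto
      then have "l*t \<le> -l*(real_of_int s - f j)" by (metis minus_diff_eq mult_minus_right mult_minus_left)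
      then have "A \<le> exp (-l*(real_of_int s - f j) - \<alpha>*real j)" unfolding A_def using aj by simp
      then show ?thesis unfolding H_def by (smt (verit) exp_gt_zero)
    qed
  qed
  have step: "(\<integral>\<^sup>+x. ennreal (H (Suc j) (s + int x - 1)) \<partial>binomial_pmf (nat (int n - int (Suc j) - s)) p) \<le> ennreal (H j s)"
    if j: "j < K" and nb: "\<not> B j s" for j s
  proof -
    define sr where "sr = real_of_int s"
    define N where "N = nat (int n - int (Suc j) - s)"
    define u where "u = sr / real n"
    define v where "v = real (Suc j) / real n"
    define w where "w = 1 / real n"
    define R where "R = 1 + \<gamma>*\<epsilon> - v + w/2"
    have sf: "\<bar>sr - f j\<bar> \<le> t" using nb unfolding B_def sr_def by simp
    have jK: "real (Suc j) \<le> 3*real n*\<epsilon>" using j KR by linarith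
    have fj: "\<bar>f j\<bar> \<le> 15/2*real n*\<epsilon>^2"
    proof -
      have j3: "real j \<le> 3*real n*\<epsilon>" using jK by simp
      have a: "\<bar>real j * (\<gamma>*\<epsilon>)\<bar> \<le> (3*real n*\<epsilon>)*\<epsilon>"
        unfolding abs_mult using j3 ge by (intro mult_mono) auto
      have "real j * real j \<le> (3*real n*\<epsilon>)*(3*real n*\<epsilon>)" using j3 e by (intro mult_mono) auto
      then have b: "real j * real j / (2*real n) \<le> 9/2*real n*\<epsilon>^2"
        using nR by (simp add: field_simps power2_eq_square)
      have fe: "f j = real j * (\<gamma>*\<epsilon>) - real j * real j / (2*real n)" unfolding f_def by (simp add: algebra_simps)
      have c0: "0 \<le> real j * real j / (2*real n)" by simp
      have "\<bar>f j\<bar> \<le> \<bar>real j * (\<gamma>*\<epsilon>)\<bar> + real j * real j / (2*real n)"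
        unfolding fe using c0 by linarith
      also have "\<dots> \<le> (3*real n*\<epsilon>)*\<epsilon> + 9/2*real n*\<epsilon>^2" using a b by linarith
      also have "\<dots> = 15/2*real n*\<epsilon>^2" by (simp add: power2_eq_square algebra_simps)
      finally show ?thesis .
    qed
    have tle: "t \<le> 1*(real n*\<epsilon>^2)" unfolding t_def using \<eta> e by (intro mult_right_mono) auto
    have "\<bar>sr\<bar> \<le> 9*real n*\<epsilon>^2" using sf fj tle by linarith
    then have u9: "\<bar>u\<bar> \<le> 9*\<epsilon>^2" unfolding u_def using nR by (simp add: divide_le_eq mult.commute mult.left_commute)
    have v0: "0 \<le> v" and v3: "v \<le> 3*\<epsilon>" unfolding v_def using jK nR by (auto simp: field_simps)
    have w0: "0 \<le> w" and w3: "w \<le> \<epsilon>^3" unfolding w_def using winv by auto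
    have g1: "\<bar>\<gamma>\<bar> \<le> 1" using g by simp
    note core = arith_core[OF e(1) e1 g1 u9 v0 v3 w0 w3 l0 l1]
    have npos: "0 < real n - real (Suc j) - sr"
    proof -
      have "0 < real n * (1 - v - u)" using core(1) nR by simp
      moreover have "real n * (1 - v - u) = real n - real n * v - real n * u" by (simp add: algebra_simps)
      moreover have "real n * v = real (Suc j)" unfolding v_def using nR by simp
      moreover have "real n * u = sr" unfolding u_def using nR by simp
      ultimately show ?thesis by linarith
    qed
    have NR: "real N = real n - real (Suc j) - sr"
    proof -
      have "0 \<le> int n - int (Suc j) - s" using npos unfolding sr_def by linarith
      then show ?thesis unfolding N_def sr_def by (simp add: of_nat_nat)
    qed
    have Np: "real N * p = (1+\<gamma>*\<epsilon>)*(1 - v - u)"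
      unfolding NR p_def u_def v_def using nR by (simp add: field_simps)
    have c1: "real N * p * (exp l - 1) \<le> l*R + \<alpha>" unfolding Np R_def \<alpha>_def using core(2) by simp
    have c2: "real N * p * (exp (-l) - 1) \<le> -l*R + \<alpha>" unfolding Np R_def \<alpha>_def using core(3) by simp
    have fS: "f (Suc j) = f j + (R - 1)"
      unfolding f_def R_def v_def w_def using nR by (simp add: field_simps)
    have i1: "l*(sr - 1 - f (Suc j)) - \<alpha>*real (Suc j) + (l*R + \<alpha>) = l*(sr - f j) - \<alpha>*real j"
      unfolding fS by (simp add: algebra_simps)
    have i2: "-l*(sr - 1 - f (Suc j)) - \<alpha>*real (Suc j) + (-l*R + \<alpha>) = -l*(sr - f j) - \<alpha>*real j"
      unfolding fS by (simp add: algebra_simps)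
    have T1: "(\<integral>\<^sup>+x. ennreal (exp (l*(sr + real x - 1 - f (Suc j)) - \<alpha>*real (Suc j))) \<partial>binomial_pmf N p)
       \<le> ennreal (exp (l*(sr - f j) - \<alpha>*real j))"
      using term_step[OF p01 c1, of sr "f (Suc j)" "\<alpha>*real (Suc j)"] unfolding i1 .
    have T2: "(\<integral>\<^sup>+x. ennreal (exp (-l*(sr + real x - 1 - f (Suc j)) - \<alpha>*real (Suc j))) \<partial>binomial_pmf N p)
       \<le> ennreal (exp (-l*(sr - f j) - \<alpha>*real j))"
      using term_step[OF p01 c2, of sr "f (Suc j)" "\<alpha>*real (Suc j)"] unfolding i2 .
    have "(\<integral>\<^sup>+x. ennreal (H (Suc j) (s + int x - 1)) \<partial>binomial_pmf N p)
       = (\<integral>\<^sup>+x. ennreal (exp (l*(sr + real x - 1 - f (Suc j)) - \<alpha>*real (Suc j)))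
            + ennreal (exp (-l*(sr + real x - 1 - f (Suc j)) - \<alpha>*real (Suc j))) \<partial>binomial_pmf N p)"
      unfolding H_def sr_def by (intro nn_integral_cong) (simp add: ennreal_plus)
    also have "\<dots> = (\<integral>\<^sup>+x. ennreal (exp (l*(sr + real x - 1 - f (Suc j)) - \<alpha>*real (Suc j))) \<partial>binomial_pmf N p)
       + (\<integral>\<^sup>+x. ennreal (exp (-l*(sr + real x - 1 - f (Suc j)) - \<alpha>*real (Suc j))) \<partial>binomial_pmf N p)"
      by (rule nn_integral_add) auto
    also have "\<dots> \<le> ennreal (exp (l*(sr - f j) - \<alpha>*real j)) + ennreal (exp (-l*(sr - f j) - \<alpha>*real j))"
      using T1 T2 by (rule add_mono)
    also have "\<dots> = ennreal (H j s)" unfolding H_def sr_def by (simp add: ennreal_plus)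
    finally show ?thesis unfolding N_def .
  qed
  have "measure_pmf.prob (expl_path n p K) {xs. \<exists>j\<le>K. B j (xs!j)} \<le> H 0 0 / A"
    by (rule maxprob[OF Hnn step thr]) (auto simp: A_def)
  also have "H 0 0 / A = 2 * exp (-(l*t - \<alpha>*real K))"
  proof -
    have "H 0 0 = 2" by (simp add: H_def f_def)
    then show ?thesis unfolding A_def by (simp add: exp_minus divide_inverse del: minus_diff_eq)
  qed
  also have "\<dots> \<le> 2 * exp (-((\<eta>^2/48) * (real n * \<epsilon>^3)))"
  proof -
    have ne0: "0 \<le> real n * \<epsilon>^3" using e by simp
    have "\<alpha>*real K \<le> \<alpha>*(3*real n*\<epsilon>)" using KR \<alpha>0 by (rule mult_left_mono)
    also have "\<dots> = (7/2*\<eta>*\<epsilon>) * (real n * \<epsilon>^3) + (\<eta>^2/24) * (real n * \<epsilon>^3)"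
      unfolding \<alpha>_def l_def by (simp add: algebra_simps power2_eq_square power3_eq_cube)
    also have "\<dots> \<le> (\<eta>^2/48) * (real n * \<epsilon>^3) + (\<eta>^2/24) * (real n * \<epsilon>^3)"
    proof -
      have "7/2*\<eta>*\<epsilon> \<le> 7/2*\<eta>*(\<eta>/168)" using e \<eta> by (intro mult_left_mono) auto
      then have "7/2*\<eta>*\<epsilon> \<le> \<eta>^2/48" by (simp add: power2_eq_square)
      then show ?thesis using ne0 by (intro add_mono mult_right_mono) auto
    qed
    finally have "\<alpha>*real K \<le> (\<eta>^2/48) * (real n * \<epsilon>^3) + (\<eta>^2/24) * (real n * \<epsilon>^3)" .
    moreover have "l*t = (\<eta>^2/12) * (real n * \<epsilon>^3)"
      unfolding l_def t_def by (simp add: algebra_simps power2_eq_square power3_eq_cube)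
    ultimately have "(\<eta>^2/48) * (real n * \<epsilon>^3) \<le> l*t - \<alpha>*real K" by (simp add: algebra_simps)
    then show ?thesis by simp
  qed
  also have "\<dots> \<le> exp (-(\<eta>^2/96) * real n * \<epsilon>^3)"
  proof -
    define X where "X = (\<eta>^2/96) * (real n * \<epsilon>^3)"
    have X1: "1 \<le> X" unfolding X_def using ne2 \<eta> by (simp add: field_simps)
    have "2 * exp (-(2*X)) = exp (ln 2 - 2*X)" by (simp add: exp_diff exp_minus field_simps)
    also have "\<dots> \<le> exp (-X)" using ln_2_less_1 X1 by simp
    finally show ?thesis unfolding X_def by (simp add: algebra_simps)
  qed
  finally show ?thesis unfolding p_def K_def B_def t_def f_def by simp
qed


theorem proposition3p2:
  fixes em ep :: "nat \<Rightarrow> real" and \<eta> :: real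
  assumes "\<And>n. em n \<le> ep n"
    and "filterlim (\<lambda>n. real n powr (1/3) * em n) at_top sequentially"
    and "ep \<longlonglongrightarrow> 0"
    and "\<eta> > 0"
  shows "\<exists>\<kappa>>0. \<exists>N. \<forall>n\<ge>N. \<forall>\<epsilon> \<gamma>.
           em n \<le> \<epsilon> \<and> \<epsilon> \<le> ep n \<and> -1 \<le> \<gamma> \<and> \<gamma> \<le> 1 \<longrightarrow>
           (let p = (1 + \<gamma> * \<epsilon>) / real n; K = nat \<lfloor>3 * real n * \<epsilon>\<rfloor> in
            measure_pmf.prob (expl_path n p K)
              {xs. (MAX k\<in>{0..K}. \<bar>real_of_int (xs ! k) - real k * (\<gamma> * \<epsilon> - real k / (2 * real n))\<bar>
                      / (real n * \<epsilon>^2)) > \<eta>}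
            \<le> exp (- \<kappa> * real n * \<epsilon>^3))"
proof -
  define \<eta>' where "\<eta>' = min \<eta> 1"
  have h0: "0 < \<eta>'" and h1: "\<eta>' \<le> 1" and h2: "\<eta>' \<le> \<eta>" using assms(4) by (auto simp: \<eta>'_def)
  define M where "M = max 1 (96/\<eta>'^2)"
  have M1: "1 \<le> M" and M2: "96/\<eta>'^2 \<le> M" by (auto simp: M_def)
  have ev1: "eventually (\<lambda>n. M \<le> real n powr (1/3) * em n) sequentially"
    using assms(2) unfolding filterlim_at_top by blast
  have ev2: "eventually (\<lambda>n. ep n < \<eta>'/168) sequentially"
    using order_tendstoD(2)[OF assms(3), of "\<eta>'/168"] h0 by simp
  have ev3: "eventually (\<lambda>n. 2 \<le> n) sequentially" by (rule eventually_ge_at_top)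
  obtain N where N: "\<And>n. n \<ge> N \<Longrightarrow> M \<le> real n powr (1/3) * em n \<and> ep n < \<eta>'/168 \<and> 2 \<le> n"
    using eventually_conj[OF ev1 eventually_conj[OF ev2 ev3]] unfolding eventually_sequentially by blast
  have main: "measure_pmf.prob (expl_path n ((1 + \<gamma> * \<epsilon>) / real n) (nat \<lfloor>3 * real n * \<epsilon>\<rfloor>))
              {xs. (MAX k\<in>{0..nat \<lfloor>3 * real n * \<epsilon>\<rfloor>}. \<bar>real_of_int (xs ! k) - real k * (\<gamma> * \<epsilon> - real k / (2 * real n))\<bar>
                      / (real n * \<epsilon>^2)) > \<eta>}
            \<le> exp (- (\<eta>'^2/96) * real n * \<epsilon>^3)"
    if n: "n \<ge> N" and c: "em n \<le> \<epsilon>" "\<epsilon> \<le> ep n" "-1 \<le> \<gamma>" "\<gamma> \<le> 1" for n \<epsilon> \<gamma>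
  proof -
    note Nn = N[OF n]
    have n2: "2 \<le> n" using Nn by simp
    have nR: "0 < real n" using n2 by simp
    define r where "r = real n powr (1/3)"
    have r0: "0 < r" unfolding r_def using nR by simp
    have r3: "r^3 = real n" unfolding r_def using nR by (simp add: powr_power)
    have Mr: "M \<le> r * em n" using Nn unfolding r_def by simp
    have em0: "0 < em n"
    proof (rule ccontr)
      assume "\<not> 0 < em n"
      then have "r * em n \<le> 0" using r0 by (simp add: mult_nonneg_nonpos)
      then show False using Mr M1 by linarith
    qed
    have e0: "0 < \<epsilon>" using em0 c by linarith
    have e1: "\<epsilon> \<le> \<eta>'/168" using c Nn by linarith
    have "M^3 \<le> (r * em n)^3" using Mr M1 by (intro power_mono) auto
    also have "\<dots> = real n * em n ^3" using r3 by (simp add: power_mult_distrib)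
    also have "\<dots> \<le> real n * \<epsilon>^3" using em0 c nR by (intro mult_left_mono power_mono) auto
    finally have Mn: "M^3 \<le> real n * \<epsilon>^3" .
    have "M \<le> M^3"
    proof -
      have "M * 1 \<le> M * M^2" using M1 by (intro mult_left_mono) (auto simp: one_le_power)
      then show ?thesis by (simp add: power3_eq_cube power2_eq_square)
    qed
    then have ne1: "1 \<le> real n * \<epsilon>^3" and ne2: "96/\<eta>'^2 \<le> real n * \<epsilon>^3" using Mn M1 M2 by linarith+
    have T0: "0 < real n * \<epsilon>^2" using nR e0 by simp
    let ?K = "nat \<lfloor>3 * real n * \<epsilon>\<rfloor>"
    let ?D = "\<lambda>xs k. \<bar>real_of_int (xs ! k) - real k * (\<gamma> * \<epsilon> - real k / (2 * real n))\<bar>"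
    have sub: "{xs. (MAX k\<in>{0..?K}. ?D xs k / (real n * \<epsilon>^2)) > \<eta>}
       \<subseteq> {xs. \<exists>k\<le>?K. \<eta>'*(real n*\<epsilon>^2) < ?D xs k}"
    proof
      fix xs assume "xs \<in> {xs. (MAX k\<in>{0..?K}. ?D xs k / (real n * \<epsilon>^2)) > \<eta>}"
      then have "\<exists>k\<in>{0..?K}. \<eta> < ?D xs k / (real n * \<epsilon>^2)"
        by (subst (asm) Max_gr_iff) auto
      then obtain k where k: "k \<le> ?K" "\<eta> < ?D xs k / (real n * \<epsilon>^2)" by auto
      then have "\<eta> * (real n * \<epsilon>^2) < ?D xs k" using T0 by (simp add: less_divide_eq)
      moreover have "\<eta>' * (real n * \<epsilon>^2) \<le> \<eta> * (real n * \<epsilon>^2)" using h2 T0 by (intro mult_right_mono) auto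
      ultimately show "xs \<in> {xs. \<exists>k\<le>?K. \<eta>'*(real n*\<epsilon>^2) < ?D xs k}" using k by auto
    qed
    have "measure_pmf.prob (expl_path n ((1 + \<gamma> * \<epsilon>) / real n) ?K)
              {xs. (MAX k\<in>{0..?K}. ?D xs k / (real n * \<epsilon>^2)) > \<eta>}
        \<le> measure_pmf.prob (expl_path n ((1 + \<gamma> * \<epsilon>) / real n) ?K) {xs. \<exists>k\<le>?K. \<eta>'*(real n*\<epsilon>^2) < ?D xs k}"
      using sub by (intro measure_pmf.finite_measure_mono) auto
    also have "\<dots> \<le> exp (-(\<eta>'^2/96) * real n * \<epsilon>^3)"
      by (rule main_bound[OF h0 h1 e0 e1 c(3) c(4) n2 ne1 ne2])
    finally show ?thesis .
  qed
  show ?thesis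
    apply (rule exI[of _ "\<eta>'^2/96"])
    apply (intro conjI)
     apply (use h0 in simp)
    apply (rule exI[of _ N])
    using main by (auto simp: Let_def)
qed

end
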